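(* Let $\sigma_0,\sigma_\epsilon>0$, $\theta_0,b\in\mathbb{R}$. Let the prior belief be $\Theta\sim\mathrm{Cauchy}(\theta_0,\sigma_0)$ and let the signal be $X=\Theta+b+\epsilon$ with $\epsilon\sim\mathrm{Cauchy}(0,\sigma_\epsilon)$ independent of $\Theta$. Then for every $x\in\mathbb{R}$ the posterior mean $\theta_1=\mathbb{E}[\Theta\mid X=x]$ exists and satisfies $$\theta_1-\theta_0=\omega\,(x-b-\theta_0),\qquad \omega=\frac{\sigma_0}{\sigma_0+\sigma_\epsilon}.$$
   Context: $\mathrm{Cauchy}(\mu,s)$ denotes the distribution with density $t\mapsto\dfrac{1}{\pi s\,[1+((t-\mu)/s)^2]}$. The posterior mean is $\theta_1=\dfrac{\int\theta\,f_\Theta(\theta)\,l_\epsilon(x-b-\theta)\,d\theta}{\int f_\Theta(\theta)\,l_\epsilon(x-b-\theta)\,d\theta}$, with $f_\Theta$ the prior density and $l_\epsilon$ the noise density. *)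

theory Defs
  imports "HOL-Analysis.Analysis"
begin

definition cauchy_density :: "real \<Rightarrow> real \<Rightarrow> real \<Rightarrow> real" where
  "cauchy_density mu s t = 1 / (pi * s * (1 + ((t - mu) / s)\<^sup>2))"

text \<open>Posterior mean of Theta given X = x, where X = Theta + b + eps,
  with prior density fT and noise density le (Lebesgue integrals over the real line).\<close>
definition posterior_mean :: "(real \<Rightarrow> real) \<Rightarrow> (real \<Rightarrow> real) \<Rightarrow> real \<Rightarrow> real \<Rightarrow> real" where
  "posterior_mean fT le b x =
     (\<integral>\<theta>. \<theta> * fT \<theta> * le (x - b - \<theta>) \<partial>lborel) / (\<integral>\<theta>. fT \<theta> * le (x - b - \<theta>) \<partial>lborel)"

end

theory Submission
  imports Defs "HOL-Real_Asymp.Real_Asymp"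
begin


lemma ftc_R_nonneg:
  fixes f F :: "real \<Rightarrow> real"
  assumes F: "\<And>x. (F has_real_derivative f x) (at x)"
    and c: "\<And>x. isCont f x" and nn: "\<And>x. 0 \<le> f x"
    and A: "(F \<longlongrightarrow> A) at_bot" and B: "(F \<longlongrightarrow> B) at_top"
  shows "integrable lborel f \<and> integral\<^sup>L lborel f = B - A"
proof -
  have e: "einterval (-\<infinity>) \<infinity> = UNIV" by (auto simp: einterval_iff)
  note r = interval_integral_FTC_nonneg[of "-\<infinity>" "\<infinity>" F f A B]
  have A': "((F \<circ> real_of_ereal) \<longlongrightarrow> A) (at_right (-\<infinity>))" using A unfolding ereal_tendsto_simps1 .
  have B': "((F \<circ> real_of_ereal) \<longlongrightarrow> B) (at_left \<infinity>)" using B unfolding ereal_tendsto_simps1 .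
  from r[OF _ F c _ A' B'] nn show ?thesis
    by (auto simp: e interval_lebesgue_integral_def set_integrable_def set_lebesgue_integral_def)
qed

lemma ftc_R_int:
  fixes f F :: "real \<Rightarrow> real"
  assumes F: "\<And>x. (F has_real_derivative f x) (at x)"
    and c: "\<And>x. isCont f x" and i: "integrable lborel f"
    and A: "(F \<longlongrightarrow> A) at_bot" and B: "(F \<longlongrightarrow> B) at_top"
  shows "integral\<^sup>L lborel f = B - A"
proof -
  have e: "einterval (-\<infinity>) \<infinity> = UNIV" by (auto simp: einterval_iff)
  note r = interval_integral_FTC_integrable[of "-\<infinity>" "\<infinity>" F f A B]
  have A': "((F \<circ> real_of_ereal) \<longlongrightarrow> A) (at_right (-\<infinity>))" using A unfolding ereal_tendsto_simps1 .
  have B': "((F \<circ> real_of_ereal) \<longlongrightarrow> B) (at_left \<infinity>)" using B unfolding ereal_tendsto_simps1 .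
  have F': "(F has_vector_derivative f x) (at x)" for x using F[of x] by (simp add: has_real_derivative_iff_has_vector_derivative)
  from r[OF _ F' c _ A' B'] i show ?thesis
    by (auto simp: e interval_lebesgue_integral_def set_integrable_def set_lebesgue_integral_def)
qed

lemma DERIV_eqI: "(F has_real_derivative D) (at x) \<Longrightarrow> D = E \<Longrightarrow> (F has_real_derivative E) (at x)" by simp

lemma gen_deriv:
  fixes a c d \<alpha> \<beta> \<gamma> u :: real assumes a: "a > 0" and c: "c > 0"
  shows "((\<lambda>u. \<alpha> * (ln (u^2 + a^2) - ln ((u-d)^2 + c^2)) + \<beta> * arctan (u/a) + \<gamma> * arctan ((u-d)/c))
     has_real_derivative (2*\<alpha>*u + \<beta>*a)/(u^2+a^2) + (-2*\<alpha>*(u-d) + \<gamma>*c)/((u-d)^2+c^2)) (at u)"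
proof -
  have P: "u^2 + a^2 > 0" using a by (simp add: add_nonneg_pos)
  have Q: "(u-d)^2 + c^2 > 0" using c by (simp add: add_nonneg_pos)
  have e1: "1 + (u/a)^2 = (u^2+a^2)/a^2" using a by (simp add: field_simps)
  have e2: "1 + ((u-d)/c)^2 = ((u-d)^2+c^2)/c^2" using c by (simp add: field_simps)
  show ?thesis
    apply (rule DERIV_eqI)
     using a c apply (auto intro!: derivative_eq_intros simp: P Q)[1]
    using P Q a c apply (simp add: e1 e2 divide_simps)
    apply (simp add: power2_eq_square algebra_simps)
    done
qed

lemma gen_lim:
  fixes a c d \<alpha> \<beta> \<gamma> :: real assumes a: "a > 0" and c: "c > 0"
  shows "((\<lambda>u. \<alpha> * (ln (u^2 + a^2) - ln ((u-d)^2 + c^2)) + \<beta> * arctan (u/a) + \<gamma> * arctan ((u-d)/c))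
          \<longlongrightarrow> (\<beta> + \<gamma>) * (pi/2)) at_top"
    and "((\<lambda>u. \<alpha> * (ln (u^2 + a^2) - ln ((u-d)^2 + c^2)) + \<beta> * arctan (u/a) + \<gamma> * arctan ((u-d)/c))
          \<longlongrightarrow> -((\<beta> + \<gamma>) * (pi/2))) at_bot"
proof -
  have l1: "((\<lambda>u::real. ln (u^2 + a^2) - ln ((u-d)^2 + c^2)) \<longlongrightarrow> 0) at_top" using a c by real_asymp
  have l2: "((\<lambda>u::real. ln (u^2 + a^2) - ln ((u-d)^2 + c^2)) \<longlongrightarrow> 0) at_bot" using a c by real_asymp
  have l3: "((\<lambda>u::real. arctan (u/a)) \<longlongrightarrow> pi/2) at_top" using a by real_asymp
  have l4: "((\<lambda>u::real. arctan (u/a)) \<longlongrightarrow> -(pi/2)) at_bot" using a by real_asymp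
  have l5: "((\<lambda>u::real. arctan ((u-d)/c)) \<longlongrightarrow> pi/2) at_top" using c by real_asymp
  have l6: "((\<lambda>u::real. arctan ((u-d)/c)) \<longlongrightarrow> -(pi/2)) at_bot" using c by real_asymp
  have "((\<lambda>u. \<alpha> * (ln (u^2 + a^2) - ln ((u-d)^2 + c^2)) + \<beta> * arctan (u/a) + \<gamma> * arctan ((u-d)/c))
          \<longlongrightarrow> \<alpha> * 0 + \<beta> * (pi/2) + \<gamma> * (pi/2)) at_top"
    by (intro tendsto_intros l1 l3 l5)
  then show "((\<lambda>u. \<alpha> * (ln (u^2 + a^2) - ln ((u-d)^2 + c^2)) + \<beta> * arctan (u/a) + \<gamma> * arctan ((u-d)/c))
          \<longlongrightarrow> (\<beta> + \<gamma>) * (pi/2)) at_top" by (rule tendsto_eq_rhs) (simp add: algebra_simps)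
  have "((\<lambda>u. \<alpha> * (ln (u^2 + a^2) - ln ((u-d)^2 + c^2)) + \<beta> * arctan (u/a) + \<gamma> * arctan ((u-d)/c))
          \<longlongrightarrow> \<alpha> * 0 + \<beta> * -(pi/2) + \<gamma> * -(pi/2)) at_bot"
    by (intro tendsto_intros l2 l4 l6)
  then show "((\<lambda>u. \<alpha> * (ln (u^2 + a^2) - ln ((u-d)^2 + c^2)) + \<beta> * arctan (u/a) + \<gamma> * arctan ((u-d)/c))
          \<longlongrightarrow> -((\<beta> + \<gamma>) * (pi/2))) at_bot" by (rule tendsto_eq_rhs) (simp add: algebra_simps)
qed

lemma cauchy_int:
  fixes c d :: real assumes c: "c > 0"
  shows "integrable lborel (\<lambda>u. 1 / ((u-d)^2 + c^2)) \<and> integral\<^sup>L lborel (\<lambda>u. 1 / ((u-d)^2 + c^2)) = pi / c"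
proof -
  have one: "(1::real) > 0" by simp
  have Q: "(u-d)^2 + c^2 > 0" for u using c by (simp add: add_nonneg_pos)
  have r: "integrable lborel (\<lambda>u. 1 / ((u-d)^2 + c^2)) \<and> integral\<^sup>L lborel (\<lambda>u. 1 / ((u-d)^2 + c^2))
     = (0 + 1/c) * (pi/2) - (-((0 + 1/c) * (pi/2)))"
    apply (rule ftc_R_nonneg[OF _ _ _ gen_lim(2)[OF one c, where \<alpha>=0 and \<beta>=0 and d=d and \<gamma>="1/c"] gen_lim(1)[OF one c, where \<alpha>=0 and \<beta>=0 and d=d and \<gamma>="1/c"]])
    subgoal for x using c by (intro DERIV_eqI[OF gen_deriv[OF one c]]) simp
    subgoal for x using Q[of x] by (auto intro!: continuous_intros)
    subgoal for x using Q[of x] by simp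
    done
  then show ?thesis by simp
qed

lemma pf: fixes P Q X Y N :: real
  assumes "P \<noteq> 0" "Q \<noteq> 0" "X*Q + Y*P = N" shows "N/(P*Q) = X/P + Y/Q"
  using assms by (auto simp: field_simps)

lemma nondeg:
  fixes a c d :: real
  assumes a: "a > 0" and c: "c > 0"
  defines "k \<equiv> d^2 + c^2 - a^2"
  defines "\<Delta> \<equiv> k^2 + 4*d^2*a^2"
  assumes D: "\<Delta> \<noteq> 0"
  shows "integrable lborel (\<lambda>u. 1/((u^2+a^2)*((u-d)^2+c^2)))
    \<and> integral\<^sup>L lborel (\<lambda>u. 1/((u^2+a^2)*((u-d)^2+c^2))) = pi*(a+c)/(a*c*(d^2+(a+c)^2))"
proof -
  define \<alpha> where "\<alpha> = d/\<Delta>"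
  define \<beta> where "\<beta> = k/(a*\<Delta>)"
  define \<gamma> where "\<gamma> = (2*d^2-k)/(c*\<Delta>)"
  have P: "u^2 + a^2 > 0" for u using a by (simp add: add_nonneg_pos)
  have Q: "(u-d)^2 + c^2 > 0" for u using c by (simp add: add_nonneg_pos)
  have eq: "1/((u^2+a^2)*((u-d)^2+c^2)) = (2*\<alpha>*u + \<beta>*a)/(u^2+a^2) + (-2*\<alpha>*(u-d) + \<gamma>*c)/((u-d)^2+c^2)" for u
  proof -
    have x: "2*\<alpha>*u + \<beta>*a = (2*d*u+k)/\<Delta>" using a D by (simp add: \<alpha>_def \<beta>_def field_simps)
    have y: "-2*\<alpha>*(u-d) + \<gamma>*c = (4*d^2-2*d*u-k)/\<Delta>" using c D by (simp add: \<alpha>_def \<gamma>_def field_simps power2_eq_square)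
    have poly: "(2*d*u+k)*((u-d)^2+c^2) + (4*d^2-2*d*u-k)*(u^2+a^2) = \<Delta>"
      unfolding \<Delta>_def k_def by algebra
    have "((2*d*u+k)/\<Delta>)*((u-d)^2+c^2) + ((4*d^2-2*d*u-k)/\<Delta>)*(u^2+a^2) = 1"
      using poly D by (simp add: add_divide_distrib[symmetric])
    then have h: "1/((u^2+a^2)*((u-d)^2+c^2)) = ((2*d*u+k)/\<Delta>)/(u^2+a^2) + ((4*d^2-2*d*u-k)/\<Delta>)/((u-d)^2+c^2)"
      using P[of u] Q[of u] by (intro pf) auto
    show ?thesis unfolding x y by (rule h)
  qed
  have r: "integrable lborel (\<lambda>u. 1/((u^2+a^2)*((u-d)^2+c^2)))
    \<and> integral\<^sup>L lborel (\<lambda>u. 1/((u^2+a^2)*((u-d)^2+c^2))) = (\<beta> + \<gamma>) * (pi/2) - (-((\<beta> + \<gamma>) * (pi/2)))"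
    apply (rule ftc_R_nonneg[OF _ _ _ gen_lim(2)[OF a c, where \<alpha>=\<alpha> and \<beta>=\<beta> and d=d and \<gamma>=\<gamma>] gen_lim(1)[OF a c, where \<alpha>=\<alpha> and \<beta>=\<beta> and d=d and \<gamma>=\<gamma>]])
    subgoal for x unfolding eq by (rule gen_deriv[OF a c])
    subgoal for x using P[of x] Q[of x] by (auto intro!: continuous_intros)
    subgoal for x using P[of x] Q[of x] by simp
    done
  have fin: "(\<beta> + \<gamma>) * (pi/2) - (-((\<beta> + \<gamma>) * (pi/2))) = pi*(a+c)/(a*c*(d^2+(a+c)^2))"
  proof -
    have fac: "\<Delta> = (d^2+(a+c)^2)*(d^2+(a-c)^2)" unfolding \<Delta>_def k_def by algebra
    have n: "k*c + (2*d^2-k)*a = (a+c)*(d^2+(a-c)^2)" unfolding k_def by algebra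
    have p1: "d^2+(a+c)^2 > 0" using a c by (simp add: add_nonneg_pos)
    have p2: "d^2+(a-c)^2 \<noteq> 0" using D fac by auto
    have "\<beta> + \<gamma> = (k*c + (2*d^2-k)*a)/(a*c*\<Delta>)" using a c D by (simp add: \<beta>_def \<gamma>_def field_simps)
    also have "\<dots> = ((a+c)*(d^2+(a-c)^2))/((a*c*(d^2+(a+c)^2))*(d^2+(a-c)^2))" unfolding n fac by (simp add: ac_simps)
    also have "\<dots> = (a+c)/(a*c*(d^2+(a+c)^2))" using p2 by (rule nonzero_mult_divide_mult_cancel_right)
    finally have bg: "\<beta> + \<gamma> = (a+c)/(a*c*(d^2+(a+c)^2))" .
    have "(\<beta> + \<gamma>) * (pi/2) - (-((\<beta> + \<gamma>) * (pi/2))) = pi*(\<beta>+\<gamma>)" by (simp add: algebra_simps)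
    then show ?thesis using bg by simp
  qed
  show ?thesis using r fin by simp
qed


lemma moment_integrable:
  fixes a c d :: real assumes a: "a > 0" and c: "c > 0"
  shows "integrable lborel (\<lambda>u. u/((u^2+a^2)*((u-d)^2+c^2)))"
proof (rule Bochner_Integration.integrable_bound[where f="\<lambda>u. (1/(2*a)) * (1/((u-d)^2+c^2))"])
  show "integrable lborel (\<lambda>u. (1/(2*a)) * (1/((u-d)^2+c^2)))"
    using cauchy_int[OF c, of d] by (intro integrable_mult_right) blast
  show "(\<lambda>u. u/((u^2+a^2)*((u-d)^2+c^2))) \<in> borel_measurable lborel" by measurable
  show "AE x in lborel. norm (x/((x^2+a^2)*((x-d)^2+c^2))) \<le> norm ((1/(2*a)) * (1/((x-d)^2+c^2)))"
  proof (rule AE_I2)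
    fix u :: real
    have P: "u^2 + a^2 > 0" using a by (simp add: add_nonneg_pos)
    have Q: "(u-d)^2 + c^2 > 0" using c by (simp add: add_nonneg_pos)
    have b: "2*a*\<bar>u\<bar> \<le> u^2 + a^2"
    proof -
      have "0 \<le> (\<bar>u\<bar> - a)^2" by simp
      then show ?thesis by (simp add: power2_eq_square algebra_simps)
    qed
    have "norm (u/((u^2+a^2)*((u-d)^2+c^2))) = \<bar>u\<bar>/((u^2+a^2)*((u-d)^2+c^2))"
      using P Q by (simp add: abs_mult)
    also have "\<dots> = (\<bar>u\<bar>/(u^2+a^2)) * (1/((u-d)^2+c^2))" by simp
    also have "\<dots> \<le> (1/(2*a)) * (1/((u-d)^2+c^2))"
    proof (rule mult_right_mono)
      show "\<bar>u\<bar>/(u^2+a^2) \<le> 1/(2*a)" using P a b by (simp add: divide_simps mult.commute)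
    qed (use Q in simp)
    also have "\<dots> = norm ((1/(2*a)) * (1/((u-d)^2+c^2)))" using Q a by simp
    finally show "norm (u/((u^2+a^2)*((u-d)^2+c^2))) \<le> norm ((1/(2*a)) * (1/((u-d)^2+c^2)))" .
  qed
qed

lemma nondeg1:
  fixes a c d :: real
  assumes a: "a > 0" and c: "c > 0"
  defines "k \<equiv> d^2 + c^2 - a^2"
  defines "\<Delta> \<equiv> k^2 + 4*d^2*a^2"
  assumes D: "\<Delta> \<noteq> 0"
  shows "integral\<^sup>L lborel (\<lambda>u. u/((u^2+a^2)*((u-d)^2+c^2))) = pi*d/(c*(d^2+(a+c)^2))"
proof -
  define \<alpha> where "\<alpha> = k/(2*\<Delta>)"
  define \<beta> where "\<beta> = -2*d*a/\<Delta>"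
  define \<gamma> where "\<gamma> = (2*d*(d^2+c^2)-k*d)/(c*\<Delta>)"
  have P: "u^2 + a^2 > 0" for u using a by (simp add: add_nonneg_pos)
  have Q: "(u-d)^2 + c^2 > 0" for u using c by (simp add: add_nonneg_pos)
  have eq: "u/((u^2+a^2)*((u-d)^2+c^2)) = (2*\<alpha>*u + \<beta>*a)/(u^2+a^2) + (-2*\<alpha>*(u-d) + \<gamma>*c)/((u-d)^2+c^2)" for u
  proof -
    have x: "2*\<alpha>*u + \<beta>*a = (k*u-2*d*a^2)/\<Delta>" using a D by (simp add: \<alpha>_def \<beta>_def field_simps power2_eq_square)
    have y: "-2*\<alpha>*(u-d) + \<gamma>*c = (-k*u+2*d*(d^2+c^2))/\<Delta>" using c D by (simp add: \<alpha>_def \<gamma>_def field_simps power2_eq_square)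
    have poly: "(k*u-2*d*a^2)*((u-d)^2+c^2) + (-k*u+2*d*(d^2+c^2))*(u^2+a^2) = \<Delta>*u"
      unfolding \<Delta>_def k_def by algebra
    have "((k*u-2*d*a^2)/\<Delta>)*((u-d)^2+c^2) + ((-k*u+2*d*(d^2+c^2))/\<Delta>)*(u^2+a^2) = u"
      using poly D by (simp add: add_divide_distrib[symmetric])
    then have h: "u/((u^2+a^2)*((u-d)^2+c^2)) = ((k*u-2*d*a^2)/\<Delta>)/(u^2+a^2) + ((-k*u+2*d*(d^2+c^2))/\<Delta>)/((u-d)^2+c^2)"
      using P[of u] Q[of u] by (intro pf) auto
    show ?thesis unfolding x y by (rule h)
  qed
  have r: "integral\<^sup>L lborel (\<lambda>u. u/((u^2+a^2)*((u-d)^2+c^2))) = (\<beta> + \<gamma>) * (pi/2) - (-((\<beta> + \<gamma>) * (pi/2)))"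
    apply (rule ftc_R_int[OF _ _ moment_integrable[OF a c] gen_lim(2)[OF a c, where \<alpha>=\<alpha> and \<beta>=\<beta> and d=d and \<gamma>=\<gamma>] gen_lim(1)[OF a c, where \<alpha>=\<alpha> and \<beta>=\<beta> and d=d and \<gamma>=\<gamma>]])
    subgoal for x unfolding eq by (rule gen_deriv[OF a c])
    subgoal for x using P[of x] Q[of x] by (auto intro!: continuous_intros)
    done
  have fac: "\<Delta> = (d^2+(a+c)^2)*(d^2+(a-c)^2)" unfolding \<Delta>_def k_def by algebra
  have n: "-2*d*a*c + (2*d*(d^2+c^2)-k*d) = d*(d^2+(a-c)^2)" unfolding k_def by algebra
  have p2: "d^2+(a-c)^2 \<noteq> 0" using D fac by auto
  have "\<beta> + \<gamma> = (-2*d*a*c + (2*d*(d^2+c^2)-k*d))/(c*\<Delta>)" using a c D by (simp add: \<beta>_def \<gamma>_def field_simps)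
  also have "\<dots> = (d*(d^2+(a-c)^2))/((c*(d^2+(a+c)^2))*(d^2+(a-c)^2))" unfolding n fac by (simp add: ac_simps)
  also have "\<dots> = d/(c*(d^2+(a+c)^2))" using p2 by (rule nonzero_mult_divide_mult_cancel_right)
  finally have bg: "\<beta> + \<gamma> = d/(c*(d^2+(a+c)^2))" .
  have "(\<beta> + \<gamma>) * (pi/2) - (-((\<beta> + \<gamma>) * (pi/2))) = pi*(\<beta>+\<gamma>)" by (simp add: algebra_simps)
  then show ?thesis using r bg by simp
qed

lemma deg0:
  fixes a :: real assumes a: "a > 0"
  shows "integrable lborel (\<lambda>u. 1/((u^2+a^2)*((u-0)^2+a^2)))
    \<and> integral\<^sup>L lborel (\<lambda>u. 1/((u^2+a^2)*((u-0)^2+a^2))) = pi*(a+a)/(a*a*(0^2+(a+a)^2))"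
proof -
  have P: "u^2 + a^2 > 0" for u using a by (simp add: add_nonneg_pos)
  have e1: "1 + (u/a)^2 = (u^2+a^2)/a^2" for u using a by (simp add: field_simps)
  have r: "integrable lborel (\<lambda>u. 1/((u^2+a^2)*((u-0)^2+a^2)))
    \<and> integral\<^sup>L lborel (\<lambda>u. 1/((u^2+a^2)*((u-0)^2+a^2))) = pi/(4*a^3) - (-pi/(4*a^3))"
  proof (rule ftc_R_nonneg[where F="\<lambda>u. u/(2*a^2*(u^2+a^2)) + arctan (u/a)/(2*a^3)"])
    fix u :: real
    show "((\<lambda>u. u/(2*a^2*(u^2+a^2)) + arctan (u/a)/(2*a^3)) has_real_derivative 1/((u^2+a^2)*((u-0)^2+a^2))) (at u)"
      apply (rule DERIV_eqI)
       using a P[of u] apply (auto intro!: derivative_eq_intros)[1]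
      using a P[of u] apply (simp add: e1 divide_simps)
      apply algebra
      done
    show "isCont (\<lambda>u. 1/((u^2+a^2)*((u-0)^2+a^2))) u" using P[of u] by (auto intro!: continuous_intros)
    show "0 \<le> 1/((u^2+a^2)*((u-0)^2+a^2))" using P[of u] by simp
  next
    have l1: "((\<lambda>u. u/(2*a^2*(u^2+a^2))) \<longlongrightarrow> 0) at_bot" using a by real_asymp
    have l2: "((\<lambda>u. arctan (u/a)) \<longlongrightarrow> -(pi/2)) at_bot" using a by real_asymp
    have l3: "((\<lambda>u. u/(2*a^2*(u^2+a^2))) \<longlongrightarrow> 0) at_top" using a by real_asymp
    have l4: "((\<lambda>u. arctan (u/a)) \<longlongrightarrow> pi/2) at_top" using a by real_asymp
    show "((\<lambda>u. u/(2*a^2*(u^2+a^2)) + arctan (u/a)/(2*a^3)) \<longlongrightarrow> -pi/(4*a^3)) at_bot"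
    proof (rule tendsto_eq_rhs[OF tendsto_add[OF l1 tendsto_divide[OF l2 tendsto_const]]])
      show "0 + - (pi / 2) / (2 * a ^ 3) = - pi / (4 * a ^ 3)" using a by (simp add: field_simps)
    qed (use a in simp)
    show "((\<lambda>u. u/(2*a^2*(u^2+a^2)) + arctan (u/a)/(2*a^3)) \<longlongrightarrow> pi/(4*a^3)) at_top"
    proof (rule tendsto_eq_rhs[OF tendsto_add[OF l3 tendsto_divide[OF l4 tendsto_const]]])
      show "0 + (pi / 2) / (2 * a ^ 3) = pi / (4 * a ^ 3)" using a by (simp add: field_simps)
    qed (use a in simp)
  qed
  have "pi/(4*a^3) - (-pi/(4*a^3)) = pi*(a+a)/(a*a*(0^2+(a+a)^2))" using a
    by (simp add: field_simps power2_eq_square power3_eq_cube)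
  then show ?thesis using r by simp
qed

lemma deg1:
  fixes a :: real assumes a: "a > 0"
  shows "integral\<^sup>L lborel (\<lambda>u. u/((u^2+a^2)*((u-0)^2+a^2))) = pi*0/(a*(0^2+(a+a)^2))"
proof -
  have P: "u^2 + a^2 > 0" for u using a by (simp add: add_nonneg_pos)
  have r: "integral\<^sup>L lborel (\<lambda>u. u/((u^2+a^2)*((u-0)^2+a^2))) = 0 - 0"
  proof (rule ftc_R_int[where F="\<lambda>u. -1/(2*(u^2+a^2))"])
    fix u :: real
    show "((\<lambda>u. -1/(2*(u^2+a^2))) has_real_derivative u/((u^2+a^2)*((u-0)^2+a^2))) (at u)"
      apply (rule DERIV_eqI)
       using a P[of u] apply (auto intro!: derivative_eq_intros)[1]
      using a P[of u] apply (simp add: divide_simps)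
      apply (simp add: power2_eq_square algebra_simps)
      done
    show "isCont (\<lambda>u. u/((u^2+a^2)*((u-0)^2+a^2))) u" using P[of u] by (auto intro!: continuous_intros)
  next
    show "integrable lborel (\<lambda>u. u/((u^2+a^2)*((u-0)^2+a^2)))" by (rule moment_integrable[OF a a])
    show "((\<lambda>u. -1/(2*(u^2+a^2))) \<longlongrightarrow> 0) at_bot" using a by real_asymp
    show "((\<lambda>u. -1/(2*(u^2+a^2))) \<longlongrightarrow> 0) at_top" using a by real_asymp
  qed
  then show ?thesis by simp
qed

lemma core:
  fixes a c d :: real assumes a: "a > 0" and c: "c > 0"
  shows "integrable lborel (\<lambda>u. 1/((u^2+a^2)*((u-d)^2+c^2)))
    \<and> integral\<^sup>L lborel (\<lambda>u. 1/((u^2+a^2)*((u-d)^2+c^2))) = pi*(a+c)/(a*c*(d^2+(a+c)^2))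
    \<and> integrable lborel (\<lambda>u. u/((u^2+a^2)*((u-d)^2+c^2)))
    \<and> integral\<^sup>L lborel (\<lambda>u. u/((u^2+a^2)*((u-d)^2+c^2))) = pi*d/(c*(d^2+(a+c)^2))"
proof (cases "(d^2 + c^2 - a^2)^2 + 4*d^2*a^2 = 0")
  case True
  have n1: "0 \<le> (d^2 + c^2 - a^2)^2" by simp
  have n2: "0 \<le> 4*d^2*a^2" by simp
  have both: "(d^2 + c^2 - a^2)^2 = 0 \<and> 4*d^2*a^2 = 0"
    using add_nonneg_eq_0_iff[OF n1 n2] True by blast
  then have d0: "d = 0" using a by simp
  with both have "c^2 = a^2" by simp
  then have "c = a" using a c by (simp add: power2_eq_iff_nonneg)
  then show ?thesis using d0 deg0[OF a] deg1[OF a] moment_integrable[OF a a, of 0] by simp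
next
  case False
  then show ?thesis using nondeg[OF a c, of d] nondeg1[OF a c, of d] moment_integrable[OF a c, of d] by simp
qed



lemma cd_eq: fixes m s t :: real assumes "s > 0"
  shows "cauchy_density m s t = s / (pi * ((t-m)^2 + s^2))"
proof -
  have X: "(t-m)^2 + s^2 > 0" using assms by (simp add: add_nonneg_pos)
  have e: "1 + ((t-m)/s)^2 = ((t-m)^2+s^2)/s^2" using assms by (simp add: field_simps)
  have "pi * s * (((t-m)^2+s^2)/s^2) = pi * ((t-m)^2 + s^2) / s" using assms by (simp add: power2_eq_square)
  then show ?thesis unfolding cauchy_density_def e using X assms by simp
qed

lemma shift_int:
  fixes h :: "real \<Rightarrow> real" and t :: real
  assumes "integrable lborel h"
  shows "integrable lborel (\<lambda>x. h (x - t)) \<and> integral\<^sup>L lborel (\<lambda>x. h (x - t)) = integral\<^sup>L lborel h"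
proof -
  have "integrable lborel (\<lambda>x. h (-t + 1*x))" using lborel_integrable_real_affine[OF assms, of 1 "-t"] by simp
  moreover have "integral\<^sup>L lborel h = \<bar>1\<bar> *\<^sub>R integral\<^sup>L lborel (\<lambda>x. h (-t + 1*x))"
    by (rule lborel_integral_real_affine) simp
  ultimately show ?thesis by simp
qed

lemma ratio_aux: fixes a c d F :: real assumes "a > 0" "c > 0" "F > 0"
  shows "(pi*d/(c*F)) / (pi*(a+c)/(a*c*F)) = a/(a+c)*d"
proof -
  have "pi*a + pi*c > 0" using assms by (simp add: add_pos_pos)
  then show ?thesis using assms by (simp add: field_simps)
qed

theorem mainTheorem3:
  fixes \<sigma>0 \<sigma>e \<theta>0 b x :: real
  assumes "\<sigma>0 > 0" and "\<sigma>e > 0"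
  shows "integrable lborel (\<lambda>\<theta>. cauchy_density \<theta>0 \<sigma>0 \<theta> * cauchy_density 0 \<sigma>e (x - b - \<theta>))
       \<and> integrable lborel (\<lambda>\<theta>. \<theta> * cauchy_density \<theta>0 \<sigma>0 \<theta> * cauchy_density 0 \<sigma>e (x - b - \<theta>))
       \<and> (\<integral>\<theta>. cauchy_density \<theta>0 \<sigma>0 \<theta> * cauchy_density 0 \<sigma>e (x - b - \<theta>) \<partial>lborel) > 0
       \<and> posterior_mean (cauchy_density \<theta>0 \<sigma>0) (cauchy_density 0 \<sigma>e) b x - \<theta>0
           = (\<sigma>0 / (\<sigma>0 + \<sigma>e)) * (x - b - \<theta>0)"
proof -
  define a where "a = \<sigma>0"
  define c where "c = \<sigma>e"
  define d where "d = x - b - \<theta>0"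
  have a: "a > 0" and c: "c > 0" using assms by (simp_all add: a_def c_def)
  define K where "K = a*c/pi^2"
  define g0 where "g0 = (\<lambda>u::real. 1/((u^2+a^2)*((u-d)^2+c^2)))"
  define g1 where "g1 = (\<lambda>u::real. u/((u^2+a^2)*((u-d)^2+c^2)))"
  define I0 where "I0 = pi*(a+c)/(a*c*(d^2+(a+c)^2))"
  define I1 where "I1 = pi*d/(c*(d^2+(a+c)^2))"
  from core[OF a c, of d] have C: "integrable lborel g0" "integral\<^sup>L lborel g0 = I0"
     "integrable lborel g1" "integral\<^sup>L lborel g1 = I1"
    unfolding g0_def g1_def I0_def I1_def by auto
  have f_eq: "cauchy_density \<theta>0 \<sigma>0 \<theta> * cauchy_density 0 \<sigma>e (x - b - \<theta>) = K * g0 (\<theta> - \<theta>0)" for \<theta>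
  proof -
    have sq: "(x - b - \<theta> - 0)^2 = ((\<theta> - \<theta>0) - d)^2" unfolding d_def by (simp add: power2_eq_square algebra_simps)
    show ?thesis
      unfolding cd_eq[OF assms(1)] cd_eq[OF assms(2)] sq
      unfolding a_def[symmetric] c_def[symmetric] K_def g0_def
      by (simp add: power2_eq_square field_simps)
  qed
  have m_eq: "\<theta> * cauchy_density \<theta>0 \<sigma>0 \<theta> * cauchy_density 0 \<sigma>e (x - b - \<theta>) = K * (g1 (\<theta> - \<theta>0) + \<theta>0 * g0 (\<theta> - \<theta>0))" for \<theta>
  proof -
    have "\<theta> * cauchy_density \<theta>0 \<sigma>0 \<theta> * cauchy_density 0 \<sigma>e (x - b - \<theta>) = \<theta> * (K * g0 (\<theta> - \<theta>0))"
      using f_eq[of \<theta>] by (simp add: mult.assoc)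
    also have "\<dots> = K * (g1 (\<theta> - \<theta>0) + \<theta>0 * g0 (\<theta> - \<theta>0))"
    proof -
      have "(\<theta>-\<theta>0)/((( \<theta>-\<theta>0)^2+a^2)*(((\<theta>-\<theta>0)-d)^2+c^2)) + \<theta>0 * (1/((( \<theta>-\<theta>0)^2+a^2)*(((\<theta>-\<theta>0)-d)^2+c^2)))
          = \<theta> * (1/((( \<theta>-\<theta>0)^2+a^2)*(((\<theta>-\<theta>0)-d)^2+c^2)))"
        by (simp add: add_divide_distrib[symmetric])
      then show ?thesis unfolding g0_def g1_def by simp
    qed
    finally show ?thesis .
  qed
  have i0: "integrable lborel (\<lambda>u. K * g0 u)" using C(1) by simp
  have i1: "integrable lborel (\<lambda>u. K * (g1 u + \<theta>0 * g0 u))" using C(1,3) by simp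
  have v0: "integral\<^sup>L lborel (\<lambda>u. K * g0 u) = K * I0" using C by simp
  have v1: "integral\<^sup>L lborel (\<lambda>u. K * (g1 u + \<theta>0 * g0 u)) = K * (I1 + \<theta>0 * I0)"
    using C by (simp add: integral_add)
  note s0 = shift_int[OF i0, of \<theta>0]
  note s1 = shift_int[OF i1, of \<theta>0]
  have F0: "(\<lambda>\<theta>. cauchy_density \<theta>0 \<sigma>0 \<theta> * cauchy_density 0 \<sigma>e (x - b - \<theta>)) = (\<lambda>\<theta>. K * g0 (\<theta> - \<theta>0))"
    using f_eq by auto
  have F1: "(\<lambda>\<theta>. \<theta> * cauchy_density \<theta>0 \<sigma>0 \<theta> * cauchy_density 0 \<sigma>e (x - b - \<theta>)) = (\<lambda>\<theta>. K * (g1 (\<theta> - \<theta>0) + \<theta>0 * g0 (\<theta> - \<theta>0)))"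
    using m_eq by auto
  have Fp: "(\<lambda>\<theta>. \<theta> * cauchy_density \<theta>0 \<sigma>0 \<theta> * cauchy_density 0 \<sigma>e (x - b - \<theta>)) = (\<lambda>\<theta>. \<theta> * cauchy_density \<theta>0 \<sigma>0 \<theta> * cauchy_density 0 \<sigma>e (x - b - \<theta>))" ..
  have Fpos: "d^2+(a+c)^2 > 0" using a c by (simp add: add_nonneg_pos)
  have Kpos: "K > 0" using a c by (simp add: K_def)
  have I0pos: "I0 > 0" using a c Fpos by (simp add: I0_def)
  have int0: "(\<integral>\<theta>. cauchy_density \<theta>0 \<sigma>0 \<theta> * cauchy_density 0 \<sigma>e (x - b - \<theta>) \<partial>lborel) = K * I0"
    unfolding F0 by (rule trans[OF conjunct2[OF s0] v0])
  have int1: "(\<integral>\<theta>. \<theta> * cauchy_density \<theta>0 \<sigma>0 \<theta> * cauchy_density 0 \<sigma>e (x - b - \<theta>) \<partial>lborel) = K * (I1 + \<theta>0 * I0)"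
    unfolding F1 by (rule trans[OF conjunct2[OF s1] v1])
  have pm: "posterior_mean (cauchy_density \<theta>0 \<sigma>0) (cauchy_density 0 \<sigma>e) b x = K * (I1 + \<theta>0 * I0) / (K * I0)"
    unfolding posterior_mean_def int0 int1 ..
  have ratio: "I1 / I0 = a / (a + c) * d"
    unfolding I0_def I1_def by (rule ratio_aux[OF a c Fpos])
  have "K * (I1 + \<theta>0 * I0) / (K * I0) - \<theta>0 = I1 / I0"
    using Kpos I0pos by (simp add: field_simps)
  then have "posterior_mean (cauchy_density \<theta>0 \<sigma>0) (cauchy_density 0 \<sigma>e) b x - \<theta>0 = (\<sigma>0 / (\<sigma>0 + \<sigma>e)) * (x - b - \<theta>0)"
    unfolding pm ratio a_def c_def d_def .
  moreover have "integrable lborel (\<lambda>\<theta>. cauchy_density \<theta>0 \<sigma>0 \<theta> * cauchy_density 0 \<sigma>e (x - b - \<theta>))"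
    unfolding F0 by (rule conjunct1[OF s0])
  moreover have "integrable lborel (\<lambda>\<theta>. \<theta> * cauchy_density \<theta>0 \<sigma>0 \<theta> * cauchy_density 0 \<sigma>e (x - b - \<theta>))"
    unfolding F1 by (rule conjunct1[OF s1])
  moreover have "(\<integral>\<theta>. cauchy_density \<theta>0 \<sigma>0 \<theta> * cauchy_density 0 \<sigma>e (x - b - \<theta>) \<partial>lborel) > 0"
    unfolding int0 using Kpos I0pos by simp
  ultimately show ?thesis by blast
qed

end
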